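(* Let $K\ge 2$ be an integer and $\alpha\in\mathbb{R}$. Let $C_{\alpha,K}$ denote the largest $C\ge 0$ such that for every $p,q\in\operatorname{relint}(\Delta^K)$, \[ D_\alpha(p\Vert q)\ \ge\ \frac{C}{2}\,\|p-q\|_1^2 . \] Then \[ C_{\alpha,K}=\begin{cases} 2^{1-\alpha} & \text{if } \alpha\in(-\infty,1],\\ K^{1-\alpha} & \text{if } \alpha\in(1,2] \text{ and } K \text{ is even},\\ K^{1-\alpha}\cdot \sigma_{\alpha,K} & \text{if } \alpha\in(1,2] \text{ and } K \text{ is odd},\\ 2^{1-\max\{\alpha,3\}} & \text{if } \alpha\in(2,+\infty) \text{ and } K=2,\\ 0 & \text{if } \alpha\in(2,+\infty) \text{ and } K\ge 3, \end{cases} \] where \[ \sigma_{\alpha,K}:=\left(\frac{\left(1-\frac1K\right)^{\frac{1-\alpha}{3-\alpha}}+\left(1+\frac1K\right)^{\frac{1-\alpha}{3-\alpha}}}{2}\right)^{3-\alpha}. \]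
   Context: $\Delta^K=\{p\in[0,1]^K:\sum_{k=1}^K p_k=1\}$ is the probability simplex and $\operatorname{relint}(\Delta^K)=\Delta^K\cap(0,1)^K$. For $\alpha\in\mathbb{R}$ and $p\in(0,+\infty)^K$, the $\alpha$-Tsallis entropy is $S_\alpha(p)=\frac{\sum_{k=1}^K p_k^\alpha}{\alpha(1-\alpha)}$ if $\alpha\notin\{0,1\}$, $S_0(p)=\sum_{k=1}^K\ln p_k$, and $S_1(p)=-\sum_{k=1}^K p_k\ln p_k$. For $p,q\in(0,+\infty)^K$, $D_\alpha(p\Vert q)$ is the Bregman divergence of $-S_\alpha$: $D_\alpha(p\Vert q)=-S_\alpha(p)+S_\alpha(q)+\langle\nabla S_\alpha(q),p-q\rangle$. Explicitly, $D_\alpha(p\Vert q)=\frac1\alpha\sum_k\frac{p_k^\alpha+(\alpha-1)q_k^\alpha-\alpha p_kq_k^{\alpha-1}}{\alpha-1}$ for $\alpha\notin\{0,1\}$, $D_0(p\Vert q)=\sum_k\big(\frac{p_k}{q_k}-\ln\frac{p_k}{q_k}-1\big)$, and $D_1(p\Vert q)=\sum_k\big(p_k\ln\frac{p_k}{q_k}-p_k+q_k\big)$. $\|x\|_1=\sum_k|x_k|$. *)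

theory Defs
  imports "HOL-Analysis.Analysis"
begin

(* Distributions on K outcomes are represented as functions nat => real,
   only the coordinates 0..K-1 matter. *)

definition relint_simplex :: "nat \<Rightarrow> (nat \<Rightarrow> real) set" where
  "relint_simplex K = {p. (\<forall>k<K. 0 < p k \<and> p k < 1) \<and> (\<Sum>k<K. p k) = 1}"

(* Bregman divergence of -S_alpha, in its explicit form *)
definition tsallis_div :: "real \<Rightarrow> nat \<Rightarrow> (nat \<Rightarrow> real) \<Rightarrow> (nat \<Rightarrow> real) \<Rightarrow> real" where
  "tsallis_div \<alpha> K p q =
    (if \<alpha> = 0 then (\<Sum>k<K. p k / q k - ln (p k / q k) - 1)
     else if \<alpha> = 1 then (\<Sum>k<K. p k * ln (p k / q k) - p k + q k)
     else (1 / \<alpha>) * (\<Sum>k<K. (p k powr \<alpha> + (\<alpha> - 1) * q k powr \<alpha>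
                                - \<alpha> * p k * q k powr (\<alpha> - 1)) / (\<alpha> - 1)))"

definition l1_dist :: "nat \<Rightarrow> (nat \<Rightarrow> real) \<Rightarrow> (nat \<Rightarrow> real) \<Rightarrow> real" where
  "l1_dist K p q = (\<Sum>k<K. \<bar>p k - q k\<bar>)"

definition pinsker_consts :: "real \<Rightarrow> nat \<Rightarrow> real set" where
  "pinsker_consts \<alpha> K = {C. 0 \<le> C \<and> (\<forall>p\<in>relint_simplex K. \<forall>q\<in>relint_simplex K.
       tsallis_div \<alpha> K p q \<ge> C / 2 * (l1_dist K p q)\<^sup>2)}"

definition sigma_const :: "real \<Rightarrow> nat \<Rightarrow> real" where
  "sigma_const \<alpha> K =
     (((1 - 1 / real K) powr ((1 - \<alpha>) / (3 - \<alpha>)) + (1 + 1 / real K) powr ((1 - \<alpha>) / (3 - \<alpha>))) / 2)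
       powr (3 - \<alpha>)"

definition C_formula :: "real \<Rightarrow> nat \<Rightarrow> real" where
  "C_formula \<alpha> K =
    (if \<alpha> \<le> 1 then 2 powr (1 - \<alpha>)
     else if \<alpha> \<le> 2 then (if even K then real K powr (1 - \<alpha>)
                          else real K powr (1 - \<alpha>) * sigma_const \<alpha> K)
     else if K = 2 then 2 powr (1 - max \<alpha> 3)
     else 0)"

end

theory Submission
  imports Defs
begin

definition f0 :: "real \<Rightarrow> real \<Rightarrow> real" where
  "f0 a x = (if a = 0 then - ln x else if a = 1 then x * ln x else x powr a / (a * (a - 1)))"
definition f1 :: "real \<Rightarrow> real \<Rightarrow> real" where
  "f1 a x = (if a = 0 then - 1 / x else if a = 1 then ln x + 1 else x powr (a - 1) / (a - 1))"
definition f2 :: "real \<Rightarrow> real \<Rightarrow> real" where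
  "f2 a x = x powr (a - 2)"

lemma f0_deriv: "0 < x \<Longrightarrow> (f0 a has_real_derivative f1 a x) (at x)"
proof -
  assume x: "0 < x"
  consider "a = 0" | "a = 1" | "a \<noteq> 0" "a \<noteq> 1" by blast
  then show ?thesis
  proof cases
    case 1
    have "((\<lambda>x. - ln x) has_real_derivative - (1 / x)) (at x)"
      using x by (auto intro!: derivative_eq_intros)
    moreover have "f0 a = (\<lambda>x. - ln x)" using 1 by (simp add: f0_def fun_eq_iff)
    ultimately show ?thesis using 1 unfolding f1_def by simp
  next
    case 2
    have "((\<lambda>x. x * ln x) has_real_derivative (ln x + 1)) (at x)"
      using x by (auto intro!: derivative_eq_intros simp: field_simps)
    moreover have "f0 a = (\<lambda>x. x * ln x)" using 2 by (simp add: f0_def fun_eq_iff)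
    ultimately show ?thesis using 2 unfolding f1_def by simp
  next
    case 3
    have "((\<lambda>x. x powr a / (a * (a - 1))) has_real_derivative (a * x powr (a - 1)) / (a * (a - 1))) (at x)"
      using x 3 by (auto intro!: derivative_eq_intros)
    moreover have "(a * x powr (a - 1)) / (a * (a - 1)) = x powr (a - 1) / (a - 1)"
      using 3 by (simp add: field_simps)
    moreover have "f0 a = (\<lambda>x. x powr a / (a * (a - 1)))" using 3 by (simp add: f0_def fun_eq_iff)
    ultimately show ?thesis using 3 unfolding f1_def by simp
  qed
qed

lemma f1_deriv: "0 < x \<Longrightarrow> (f1 a has_real_derivative f2 a x) (at x)"
proof -
  assume x: "0 < x"
  consider "a = 0" | "a = 1" | "a \<noteq> 0" "a \<noteq> 1" by blast
  then show ?thesis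
  proof cases
    case 1
    have "((\<lambda>x. - 1 / x) has_real_derivative 1 / x^2) (at x)"
      using x by (auto intro!: derivative_eq_intros simp: power2_eq_square field_simps)
    moreover have "1 / x^2 = x powr (0 - 2)"
      using x by (simp add: powr_minus powr_realpow divide_inverse)
    ultimately show ?thesis using 1 unfolding f1_def f2_def by simp
  next
    case 2
    have "((\<lambda>x. ln x + 1) has_real_derivative 1 / x) (at x)"
      using x by (auto intro!: derivative_eq_intros)
    moreover have "1 / x = x powr (1 - 2)"
      using x by (simp add: powr_minus divide_inverse)
    ultimately show ?thesis using 2 unfolding f1_def f2_def by simp
  next
    case 3
    have "((\<lambda>x. x powr (a - 1) / (a - 1)) has_real_derivative ((a - 1) * x powr (a - 1 - 1)) / (a - 1)) (at x)"
      using x by (auto intro!: derivative_eq_intros)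
    moreover have "((a - 1) * x powr (a - 1 - 1)) / (a - 1) = x powr (a - 2)"
      using 3 by (simp add: field_simps)
    ultimately show ?thesis using 3 unfolding f1_def f2_def by simp
  qed
qed

lemma aux: "(a::real) \<noteq> 0 \<Longrightarrow> a \<noteq> 1 \<Longrightarrow> (1 / a) * ((P + (a - 1) * (Q * q) - a * p * Q) / (a - 1))
   = P / (a * (a - 1)) - (Q * q) / (a * (a - 1)) - Q / (a - 1) * (p - q)"
proof -
  assume h: "a \<noteq> 0" "a \<noteq> 1"
  have "a - 1 \<noteq> 0" using h by simp
  then have e: "Q / (a - 1) * (p - q) = (a * Q * (p - q)) / (a * (a - 1))" using h by simp
  have n: "P + (a - 1) * (Q * q) - a * p * Q = P - Q * q - a * Q * (p - q)" by (simp add: algebra_simps)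
  have "(1 / a) * ((P + (a - 1) * (Q * q) - a * p * Q) / (a - 1)) = (P - Q * q - a * Q * (p - q)) / (a * (a - 1))"
    unfolding n by simp
  also have "\<dots> = P / (a * (a - 1)) - (Q * q) / (a * (a - 1)) - (a * Q * (p - q)) / (a * (a - 1))"
    by (simp add: diff_divide_distrib)
  finally show ?thesis unfolding e .
qed

lemma tsallis_div_eq:
  assumes "\<forall>k<K. 0 < p k \<and> 0 < q k"
  shows "tsallis_div a K p q = (\<Sum>k<K. f0 a (p k) - f0 a (q k) - f1 a (q k) * (p k - q k))"
proof -
  consider "a = 0" | "a = 1" | "a \<noteq> 0" "a \<noteq> 1" by blast
  then show ?thesis
  proof cases
    case 1
    have "tsallis_div a K p q = (\<Sum>k<K. p k / q k - ln (p k / q k) - 1)"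
      using 1 by (simp add: tsallis_div_def)
    also have "\<dots> = (\<Sum>k<K. f0 a (p k) - f0 a (q k) - f1 a (q k) * (p k - q k))"
      unfolding f0_def f1_def using 1
      by (intro sum.cong refl) (use assms in \<open>auto simp: ln_div field_simps\<close>)
    finally show ?thesis .
  next
    case 2
    have "tsallis_div a K p q = (\<Sum>k<K. p k * ln (p k / q k) - p k + q k)"
      using 2 by (simp add: tsallis_div_def)
    also have "\<dots> = (\<Sum>k<K. f0 a (p k) - f0 a (q k) - f1 a (q k) * (p k - q k))"
      unfolding f0_def f1_def using 2
      by (intro sum.cong refl) (use assms in \<open>auto simp: ln_div field_simps\<close>)
    finally show ?thesis .
  next
    case 3
    have "tsallis_div a K p q = (\<Sum>k<K. (1 / a) * ((p k powr a + (a - 1) * q k powr a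
                                - a * p k * q k powr (a - 1)) / (a - 1)))"
      unfolding tsallis_div_def using 3 by (simp add: sum_distrib_left)
    also have "\<dots> = (\<Sum>k<K. f0 a (p k) - f0 a (q k) - f1 a (q k) * (p k - q k))"
    proof (intro sum.cong refl)
      fix k assume "k \<in> {..<K}"
      then have q: "q k > 0" using assms by auto
      have qq: "q k powr a = q k powr (a - 1) * q k"
        using q by (simp add: powr_diff field_simps)
      have e0: "\<And>x. f0 a x = x powr a / (a * (a - 1))" using 3 by (simp add: f0_def)
      have e1: "\<And>x. f1 a x = x powr (a - 1) / (a - 1)" using 3 by (simp add: f1_def)
      show "(1 / a) * ((p k powr a + (a - 1) * q k powr a - a * p k * q k powr (a - 1)) / (a - 1))
          = f0 a (p k) - f0 a (q k) - f1 a (q k) * (p k - q k)"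
        unfolding e0 e1 qq by (rule aux[OF 3])
    qed
    finally show ?thesis .
  qed
qed

lemma seg_pos: "0 < (x::real) \<Longrightarrow> 0 < y \<Longrightarrow> 0 \<le> t \<Longrightarrow> t \<le> 1 \<Longrightarrow> 0 < y + t * (x - y)"
proof -
  assume h: "0 < x" "0 < y" "0 \<le> t" "t \<le> 1"
  have "y + t * (x - y) = (1 - t) * y + t * x" by (simp add: algebra_simps)
  moreover have "(1 - t) * y + t * x > 0"
  proof (cases "t = 0")
    case True then show ?thesis using h by simp
  next
    case False then have "t * x > 0" using h by simp
    moreover have "(1 - t) * y \<ge> 0" using h by simp
    ultimately show ?thesis by linarith
  qed
  ultimately show ?thesis by simp
qed

lemma taylor_D:
  assumes pos: "\<forall>k<K. 0 < p k \<and> 0 < q k"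
  shows "\<exists>\<xi>. 0 < \<xi> \<and> \<xi> < 1 \<and>
    tsallis_div a K p q = (\<Sum>k<K. (p k - q k)^2 * f2 a (q k + \<xi> * (p k - q k))) / 2"
proof -
  define d where "d k = p k - q k" for k
  define diff where "diff (m::nat) (t::real) = (if m = 0 then (\<Sum>k<K. f0 a (q k + t * d k))
     else if m = 1 then (\<Sum>k<K. f1 a (q k + t * d k) * d k)
     else (\<Sum>k<K. f2 a (q k + t * d k) * d k * d k))" for m t
  have zpos: "0 < q k + t * d k" if "k < K" "0 \<le> t" "t \<le> 1" for k t
    unfolding d_def using seg_pos[of "p k" "q k" t] pos that by auto
  have D: "\<forall>m t. m < 2 \<and> 0 \<le> t \<and> t \<le> 1 \<longrightarrow> DERIV (diff m) t :> diff (Suc m) t"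
  proof (intro allI impI)
    fix m :: nat and t :: real
    assume h: "m < 2 \<and> 0 \<le> t \<and> t \<le> 1"
    have lin: "((\<lambda>t. q k + t * d k) has_real_derivative d k) (at t)" for k
      by (auto intro!: derivative_eq_intros)
    show "DERIV (diff m) t :> diff (Suc m) t"
    proof (cases "m = 0")
      case True
      have "((\<lambda>t. \<Sum>k<K. f0 a (q k + t * d k)) has_real_derivative (\<Sum>k<K. f1 a (q k + t * d k) * d k)) (at t)"
        by (intro DERIV_sum DERIV_chain'[OF lin] f0_deriv zpos) (use h in auto)
      then show ?thesis using True unfolding diff_def by simp
    next
      case False
      then have m1: "m = 1" using h by auto
      have "((\<lambda>t. \<Sum>k<K. f1 a (q k + t * d k) * d k) has_real_derivative (\<Sum>k<K. f2 a (q k + t * d k) * d k * d k)) (at t)"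
        by (intro DERIV_sum DERIV_cmult_right DERIV_chain'[OF lin] f1_deriv zpos) (use h in auto)
      then show ?thesis using m1 unfolding diff_def by (simp add: fun_eq_iff)
    qed
  qed
  obtain \<xi> where xi: "0 < \<xi>" "\<xi> < 1"
    and eq: "diff 0 1 = (\<Sum>m<2. diff m 0 / fact m * 1 ^ m) + diff 2 \<xi> / fact 2 * 1 ^ 2"
    using Maclaurin[of 1 2 diff "diff 0", OF _ _ refl D] by auto
  have e1: "diff 0 1 = (\<Sum>k<K. f0 a (p k))" unfolding diff_def d_def by simp
  have e2: "(\<Sum>m<2. diff m 0 / fact m * 1 ^ m) = (\<Sum>k<K. f0 a (q k)) + (\<Sum>k<K. f1 a (q k) * (p k - q k))"
    unfolding diff_def d_def by (simp add: eval_nat_numeral)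
  have e3: "diff 2 \<xi> / fact 2 * 1 ^ 2 = (\<Sum>k<K. (p k - q k)^2 * f2 a (q k + \<xi> * (p k - q k))) / 2"
    unfolding diff_def d_def by (simp add: power2_eq_square mult_ac)
  have "tsallis_div a K p q = (\<Sum>k<K. f0 a (p k)) - (\<Sum>k<K. f0 a (q k)) - (\<Sum>k<K. f1 a (q k) * (p k - q k))"
    using tsallis_div_eq[OF pos] by (simp add: sum_subtractf)
  also have "\<dots> = (\<Sum>k<K. (p k - q k)^2 * f2 a (q k + \<xi> * (p k - q k))) / 2"
    using eq e1 e2 e3 by linarith
  finally show ?thesis using xi by blast
qed

lemma tan_neg:
  fixes x y r :: real
  assumes x: "0 < x" and y: "0 < y" and r: "0 \<le> r"
  shows "(1 + r) * y powr (-r) - r * y powr (-r-1) * x \<le> x powr (-r)"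
proof -
  define t where "t = x / y"
  have t: "0 < t" using x y by (simp add: t_def)
  have "1 - r * (t - 1) \<le> 1 - r * ln t"
    using ln_le_minus_one[OF t] r by (simp add: mult_left_mono)
  also have "1 - r * ln t \<le> exp (- r * ln t)" using exp_ge_add_one_self[of "- r * ln t"] by simp
  also have "exp (- r * ln t) = t powr (-r)" using t by (simp add: powr_def)
  finally have A: "1 - r * (t - 1) \<le> t powr (-r)" .
  have yp: "0 < y powr (-r)" using y by simp
  have "(1 - r * (t - 1)) * y powr (-r) \<le> t powr (-r) * y powr (-r)"
    using A yp by (simp add: mult_right_mono)
  also have "t powr (-r) * y powr (-r) = x powr (-r)"
  proof -
    have "t powr (-r) * y powr (-r) = (t * y) powr (-r)" using t y by (simp add: powr_mult)
    moreover have "t * y = x" unfolding t_def using y by simp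
    ultimately show ?thesis by simp
  qed
  also have "(1 - r * (t - 1)) * y powr (-r) = (1 + r) * y powr (-r) - r * y powr (-r-1) * x"
  proof -
    have "y powr (-r-1) = y powr (-r) / y" using y by (simp add: powr_diff)
    then show ?thesis unfolding t_def using y by (simp add: field_simps)
  qed
  finally show ?thesis .
qed

lemma tan_conc:
  fixes t r :: real
  assumes t: "0 < t" and r: "0 \<le> r" "r \<le> 1"
  shows "t powr r \<le> 1 + r * (t - 1)"
  using Youngs_inequality_0[of r "1 - r" t 1] assms by (simp add: algebra_simps)

lemma tan_convex:
  fixes t g :: real
  assumes t: "0 < t" and g: "1 \<le> g"
  shows "1 + g * (t - 1) \<le> t powr g"
proof -
  have "(t powr g) powr (1/g) \<le> 1 + (1/g) * (t powr g - 1)"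
    by (rule tan_conc) (use t g in auto)
  moreover have "(t powr g) powr (1/g) = t" using t g by (simp add: powr_powr)
  ultimately have "t \<le> 1 + (1/g) * (t powr g - 1)" by simp
  then have "g * t \<le> g * (1 + (1/g) * (t powr g - 1))" using g by simp
  then show ?thesis using g by (simp add: algebra_simps)
qed

lemma G_ineq:
  fixes c1 c2 U V M N r lam :: real
  assumes pos: "0 < c1" "0 < c2" "0 < U" "0 < V" "0 < M" "0 < N"
    and UV: "U + V = 1" and r: "0 \<le> r"
    and l1: "c1 * U powr (-r-1) = lam" and l2: "c2 * V powr (-r-1) = lam"
    and MN: "M + N \<le> 1"
  shows "lam \<le> c1 * M powr (-r) + c2 * N powr (-r)"
proof -
  have "0 < lam" unfolding l1[symmetric] using pos by simp
  then have lam: "0 \<le> lam" by simp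
  have pw: "X powr (-r) = X powr (-r-1) * X" if "0 < X" for X :: real
  proof -
    have "X powr (-r) = X powr ((-r-1) + 1)" by simp
    also have "\<dots> = X powr (-r-1) * X powr 1" by (rule powr_add)
    finally show ?thesis using that by simp
  qed
  have U1: "c1 * U powr (-r) = lam * U" using l1 pw[of U] pos by simp
  have V1: "c2 * V powr (-r) = lam * V" using l2 pw[of V] pos by simp
  have A1: "c1 * ((1 + r) * U powr (-r) - r * U powr (-r-1) * M) \<le> c1 * M powr (-r)"
    using tan_neg[of M U r] pos r by (simp add: mult_left_mono)
  have B1: "c1 * ((1 + r) * U powr (-r) - r * U powr (-r-1) * M) = (1 + r) * (lam * U) - r * lam * M"
  proof -
    have "c1 * ((1 + r) * U powr (-r) - r * U powr (-r-1) * M) = (1 + r) * (c1 * U powr (-r)) - r * (c1 * U powr (-r-1)) * M"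
      by (simp add: algebra_simps)
    then show ?thesis unfolding U1 l1 .
  qed
  have A2: "c2 * ((1 + r) * V powr (-r) - r * V powr (-r-1) * N) \<le> c2 * N powr (-r)"
    using tan_neg[of N V r] pos r by (simp add: mult_left_mono)
  have B2: "c2 * ((1 + r) * V powr (-r) - r * V powr (-r-1) * N) = (1 + r) * (lam * V) - r * lam * N"
  proof -
    have "c2 * ((1 + r) * V powr (-r) - r * V powr (-r-1) * N) = (1 + r) * (c2 * V powr (-r)) - r * (c2 * V powr (-r-1)) * N"
      by (simp add: algebra_simps)
    then show ?thesis unfolding V1 l2 .
  qed
  have A3: "r * lam * (M + N) \<le> r * lam" using MN r lam
    by (metis mult_left_le mult_nonneg_nonneg)
  have E1: "(1 + r) * (lam * U) + (1 + r) * (lam * V) = (1 + r) * lam"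
    using UV by (metis distrib_left mult.right_neutral)
  have E2: "r * lam * M + r * lam * N = r * lam * (M + N)" by (simp add: algebra_simps)
  have E3: "(1 + r) * lam = lam + r * lam" by (simp add: algebra_simps)
  show ?thesis using A1 B1 A2 B2 A3 E1 E2 E3 by linarith
qed

lemma CS_ineq:
  fixes d w :: "nat \<Rightarrow> real"
  assumes "\<forall>k\<in>A. 0 < w k"
  shows "(\<Sum>k\<in>A. \<bar>d k\<bar>)^2 \<le> (\<Sum>k\<in>A. (d k)^2 / w k) * (\<Sum>k\<in>A. w k)"
proof -
  have "(\<Sum>k\<in>A. (\<bar>d k\<bar> / sqrt (w k)) * sqrt (w k))\<^sup>2 \<le> (\<Sum>k\<in>A. (\<bar>d k\<bar> / sqrt (w k))\<^sup>2) * (\<Sum>k\<in>A. (sqrt (w k))\<^sup>2)"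
    by (rule Cauchy_Schwarz_ineq_sum)
  moreover have "(\<Sum>k\<in>A. (\<bar>d k\<bar> / sqrt (w k)) * sqrt (w k)) = (\<Sum>k\<in>A. \<bar>d k\<bar>)"
    using assms by (intro sum.cong) auto
  moreover have "(\<Sum>k\<in>A. (\<bar>d k\<bar> / sqrt (w k))\<^sup>2) = (\<Sum>k\<in>A. (d k)^2 / w k)"
    using assms by (intro sum.cong) (auto simp: power_divide)
  moreover have "(\<Sum>k\<in>A. (sqrt (w k))\<^sup>2) = (\<Sum>k\<in>A. w k)"
    using assms by (intro sum.cong) auto
  ultimately show ?thesis by simp
qed

lemma PS1:
  fixes z :: "nat \<Rightarrow> real"
  assumes fin: "finite A" and z: "\<forall>k\<in>A. 0 < z k" and r: "1 \<le> r"
  shows "(\<Sum>k\<in>A. z k powr r) \<le> (\<Sum>k\<in>A. z k) powr r"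
proof (cases "A = {}")
  case True then show ?thesis by simp
next
  case False
  define M where "M = (\<Sum>k\<in>A. z k)"
  have M: "0 < M" unfolding M_def using fin False z by (simp add: sum_pos)
  have le: "z k \<le> M" if "k \<in> A" for k
    unfolding M_def using that fin z by (intro member_le_sum) auto
  have "(\<Sum>k\<in>A. z k powr r) \<le> (\<Sum>k\<in>A. z k * M powr (r - 1))"
  proof (intro sum_mono)
    fix k assume k: "k \<in> A"
    have zk: "0 < z k" using z k by simp
    have "z k powr r = z k powr (1 + (r - 1))" by simp
    also have "\<dots> = z k powr 1 * z k powr (r - 1)" by (rule powr_add)
    finally have "z k powr r = z k * z k powr (r - 1)" using zk by simp
    also have "\<dots> \<le> z k * M powr (r - 1)"
      using z k le[OF k] r by (intro mult_left_mono powr_mono2) auto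
    finally show "z k powr r \<le> z k * M powr (r - 1)" .
  qed
  also have "\<dots> = M * M powr (r - 1)" unfolding M_def by (simp add: sum_distrib_right)
  also have "\<dots> = M powr r"
  proof -
    have "M powr r = M powr (1 + (r - 1))" by simp
    also have "\<dots> = M powr 1 * M powr (r - 1)" by (rule powr_add)
    finally show ?thesis using M by simp
  qed
  finally show ?thesis unfolding M_def .
qed

lemma PS2:
  fixes z :: "nat \<Rightarrow> real"
  assumes fin: "finite A" and ne: "A \<noteq> {}" and z: "\<forall>k\<in>A. 0 < z k" and r: "0 \<le> r" "r \<le> 1"
  shows "(\<Sum>k\<in>A. z k powr r) \<le> real (card A) powr (1 - r) * (\<Sum>k\<in>A. z k) powr r"
proof -
  define M where "M = (\<Sum>k\<in>A. z k)"
  define a where "a = real (card A)"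
  have M: "0 < M" unfolding M_def using fin ne z by (simp add: sum_pos)
  have a: "0 < a" unfolding a_def using fin ne by (simp add: card_gt_0_iff)
  define y where "y = M / a"
  have y: "0 < y" using M a by (simp add: y_def)
  have "(\<Sum>k\<in>A. z k powr r) \<le> (\<Sum>k\<in>A. y powr r * (1 + r * (z k / y - 1)))"
  proof (intro sum_mono)
    fix k assume k: "k \<in> A"
    have "z k powr r = y powr r * (z k / y) powr r" using z k y by (simp add: powr_divide)
    also have "\<dots> \<le> y powr r * (1 + r * (z k / y - 1))"
      using tan_conc[of "z k / y" r] z k y r by (intro mult_left_mono) auto
    finally show "z k powr r \<le> y powr r * (1 + r * (z k / y - 1))" .
  qed
  also have "(\<Sum>k\<in>A. y powr r * (1 + r * (z k / y - 1))) = y powr r * (a * (1 - r) + r * M / y)"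
  proof -
    have "(\<Sum>k\<in>A. y powr r * (1 + r * (z k / y - 1))) = (\<Sum>k\<in>A. y powr r * (1 - r) + (r * y powr r / y) * z k)"
      by (intro sum.cong refl) (simp add: field_simps)
    also have "\<dots> = a * (y powr r * (1 - r)) + (r * y powr r / y) * M"
      unfolding M_def a_def by (simp add: sum.distrib sum_distrib_left)
    finally show ?thesis by (simp add: algebra_simps)
  qed
  also have "a * (1 - r) + r * M / y = a" using a M unfolding y_def by (simp add: field_simps)
  also have "y powr r * a = a powr (1 - r) * M powr r"
    unfolding y_def using a M by (simp add: powr_divide powr_diff field_simps)
  finally show ?thesis unfolding M_def a_def .
qed

lemma opt_lam:
  fixes a W r :: real
  assumes a: "0 < a" and W: "0 < W" and r: "0 \<le> r"
  shows "a powr (r - 1) * (a powr ((r - 1) / (1 + r)) / W) powr (-r-1) = W powr (1 + r)"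
proof -
  have "(a powr ((r - 1) / (1 + r)) / W) powr (-r-1) = (a powr ((r - 1) / (1 + r))) powr (-r-1) / W powr (-r-1)"
    using a W by (simp add: powr_divide)
  also have "(a powr ((r - 1) / (1 + r))) powr (-r-1) = a powr (((r - 1) / (1 + r)) * (-r-1))"
    by (simp add: powr_powr)
  also have "((r - 1) / (1 + r)) * (-r-1) = -(r - 1)"
  proof -
    have "1 + r \<noteq> 0" using r by simp
    then show ?thesis by (simp add: field_simps)
  qed
  finally have "a powr (r - 1) * (a powr ((r - 1) / (1 + r)) / W) powr (-r-1) = a powr (r - 1) * a powr (-(r-1)) / W powr (-r-1)"
    by simp
  also have "a powr (r - 1) * a powr (-(r-1)) = 1"
  proof -
    have "a powr (r - 1) * a powr (-(r-1)) = a powr ((r - 1) + (-(r-1)))" by (rule powr_add[symmetric])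
    then show ?thesis using a by simp
  qed
  also have "1 / W powr (-r-1) = W powr (1 + r)"
  proof -
    have "-r-1 = -(1+r)" by simp
    then have "W powr (-r-1) = W powr (-(1+r))" by (rule arg_cong)
    also have "\<dots> = inverse (W powr (1 + r))" by (rule powr_minus)
    finally show ?thesis by (simp add: divide_inverse)
  qed
  finally show ?thesis .
qed

lemma phi_decr:
  fixes K e x y :: real
  assumes e: "e \<le> 0" and x: "0 < x" and xy: "x \<le> y" and yK: "2 * y \<le> K"
  shows "y powr e + (K - y) powr e \<le> x powr e + (K - x) powr e"
proof -
  have "(\<lambda>t. t powr e + (K - t) powr e) y \<le> (\<lambda>t. t powr e + (K - t) powr e) x"
  proof (rule DERIV_nonpos_imp_nonincreasing[OF xy])
    fix t assume t: "x \<le> t" "t \<le> y"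
    have t0: "0 < t" and Kt: "0 < K - t" "t \<le> K - t" using t x yK by auto
    have "((\<lambda>t. t powr e + (K - t) powr e) has_real_derivative
           e * t powr (e - 1) + e * (K - t) powr (e - 1) * (-1)) (at t)"
      using t0 Kt by (auto intro!: derivative_eq_intros)
    moreover have "e * t powr (e - 1) + e * (K - t) powr (e - 1) * (-1) \<le> 0"
    proof -
      have "(K - t) powr (e - 1) \<le> t powr (e - 1)"
        using powr_mono2'[of "e - 1" t "K - t"] e t0 Kt by simp
      then have "e * t powr (e - 1) \<le> e * (K - t) powr (e - 1)"
        using e by (simp add: mult_left_mono_neg)
      then show ?thesis by simp
    qed
    ultimately show "\<exists>y. ((\<lambda>t. t powr e + (K - t) powr e) has_real_derivative y) (at t) \<and> y \<le> 0"
      by blast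
  qed
  then show ?thesis by simp
qed

lemma int_split_aux:
  fixes e :: real and a b K :: nat
  assumes e: "e \<le> 0" and a: "1 \<le> a" and ab: "a \<le> b" and K: "a + b \<le> K"
  shows "real (K div 2) powr e + real (K - K div 2) powr e \<le> real a powr e + real b powr e"
proof -
  have aK: "a \<le> K div 2" using ab K by linarith
  have "real b \<le> real K - real a" using K by simp
  then have "real b powr e \<ge> (real K - real a) powr e"
    using powr_mono2'[of e "real b" "real K - real a"] e a ab K by auto
  moreover have "real (K - K div 2) powr e = (real K - real (K div 2)) powr e" by (simp add: of_nat_diff)
  moreover have "real (K div 2) powr e + (real K - real (K div 2)) powr e \<le> real a powr e + (real K - real a) powr e"
  proof (rule phi_decr[OF e])
    show "0 < real a" using a by simp
    show "real a \<le> real (K div 2)" using aK by simp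
    show "2 * real (K div 2) \<le> real K" by linarith
  qed
  ultimately show ?thesis by linarith
qed

lemma int_split:
  fixes e :: real and a b K :: nat
  assumes e: "e \<le> 0" and a: "1 \<le> a" and b: "1 \<le> b" and K: "a + b \<le> K"
  shows "real (K div 2) powr e + real (K - K div 2) powr e \<le> real a powr e + real b powr e"
proof (cases "a \<le> b")
  case True then show ?thesis using int_split_aux[OF e a True K] by simp
next
  case False then show ?thesis using int_split_aux[OF e b _ , of a K] K by simp
qed

lemma two_pow_ratio: "(2::real) powr (3 - a) = 4 * 2 powr (1 - a)"
proof -
  have "(2::real) powr (3 - a) = 2 powr (2 + (1 - a))" by simp
  also have "\<dots> = 2 powr 2 * 2 powr (1 - a)" by (rule powr_add)
  finally show ?thesis by simp
qed

lemma Wstar_gen: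
  fixes a h S :: real
  assumes a: "a < 3" and h: "0 < h" and S: "0 < S"
  shows "(h powr ((1 - a) / (3 - a)) * (2 * S)) powr (3 - a) = 4 * (2 * h) powr (1 - a) * S powr (3 - a)"
proof -
  have "(h powr ((1 - a) / (3 - a)) * (2 * S)) powr (3 - a)
      = (h powr ((1 - a) / (3 - a))) powr (3 - a) * 2 powr (3 - a) * S powr (3 - a)"
    using h S by (simp add: powr_mult)
  also have "(h powr ((1 - a) / (3 - a))) powr (3 - a) = h powr (1 - a)"
    using a by (simp add: powr_powr)
  also have "h powr (1 - a) * 2 powr (3 - a) = 4 * (2 * h) powr (1 - a)"
    using h by (simp add: two_pow_ratio powr_mult)
  finally show ?thesis by simp
qed

lemma Wstar_eq:
  fixes a :: real and K :: nat
  assumes a: "1 < a" "a \<le> 2" and K: "2 \<le> K"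
  defines "e \<equiv> (1 - a) / (3 - a)"
  shows "(real (K div 2) powr e + real (K - K div 2) powr e) powr (3 - a) = 4 * C_formula a K"
proof -
  define h where "h = real K / 2"
  have h: "0 < h" using K by (simp add: h_def)
  have Kh: "real K = 2 * h" by (simp add: h_def)
  show ?thesis
  proof (cases "even K")
    case True
    have d: "real (K div 2) = h" "real (K - K div 2) = h" using True by (auto simp: h_def real_of_nat_div)
    have "(real (K div 2) powr e + real (K - K div 2) powr e) powr (3 - a) = (h powr e * (2 * 1)) powr (3 - a)"
      unfolding d by (simp add: mult.commute)
    also have "\<dots> = 4 * (2 * h) powr (1 - a) * 1 powr (3 - a)"
      unfolding e_def by (rule Wstar_gen) (use a h in auto)
    also have "\<dots> = 4 * C_formula a K" unfolding C_formula_def using a True Kh by simp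
    finally show ?thesis .
  next
    case False
    define S where "S = ((1 - 1 / real K) powr e + (1 + 1 / real K) powr e) / 2"
    have K1: "1 / real K < 1" using K by simp
    have K2: "0 < 1 / real K" using K by simp
    have K3: "0 < 1 + 1 / real K" "0 < 1 - 1 / real K" using K1 K2 by linarith+
    have S: "0 < S" unfolding S_def using K3 by (intro divide_pos_pos add_pos_pos) auto
    have d1: "real (K div 2) = h * (1 - 1 / real K)"
    proof -
      have "2 * (K div 2) + 1 = K" using False by (rule odd_two_times_div_two_succ)
      then have "2 * real (K div 2) + 1 = real K" by (metis of_nat_1 of_nat_add of_nat_mult of_nat_numeral)
      then have x: "real (K div 2) = (real K - 1) / 2" by (simp add: field_simps)
      have "h * (1 - 1 / real K) = (real K - 1) / 2" unfolding h_def using K by (simp add: field_simps)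
      then show ?thesis using x by linarith
    qed
    have d2: "real (K - K div 2) = h * (1 + 1 / real K)"
    proof -
      have "real (K - K div 2) = real K - real (K div 2)" by (simp add: of_nat_diff)
      then show ?thesis using d1 Kh K by (simp add: field_simps)
    qed
    have "real (K div 2) powr e + real (K - K div 2) powr e = h powr e * (2 * S)"
    proof -
      have "(h * (1 - 1 / real K)) powr e = h powr e * (1 - 1 / real K) powr e"
        using h K3 by (simp add: powr_mult)
      moreover have "(h * (1 + 1 / real K)) powr e = h powr e * (1 + 1 / real K) powr e"
        using h K3 by (simp add: powr_mult)
      ultimately show ?thesis unfolding d1 d2 S_def by (simp add: algebra_simps)
    qed
    then have "(real (K div 2) powr e + real (K - K div 2) powr e) powr (3 - a) = (h powr e * (2 * S)) powr (3 - a)"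
      by simp
    also have "\<dots> = 4 * (2 * h) powr (1 - a) * S powr (3 - a)"
      unfolding e_def by (rule Wstar_gen) (use a h S in auto)
    also have "\<dots> = 4 * C_formula a K"
      unfolding C_formula_def sigma_const_def using a False Kh by (simp add: S_def e_def)
    finally show ?thesis .
  qed
qed

lemma split_sum:
  fixes d g :: "nat \<Rightarrow> real"
  assumes "\<And>k. k < K \<Longrightarrow> d k = 0 \<Longrightarrow> g k = 0"
  shows "(\<Sum>k<K. g k) = (\<Sum>k\<in>{k\<in>{..<K}. 0 < d k}. g k) + (\<Sum>k\<in>{k\<in>{..<K}. d k < 0}. g k)"
proof -
  let ?A = "{k\<in>{..<K}. 0 < d k}" and ?B = "{k\<in>{..<K}. d k < 0}"
  have "(\<Sum>k<K. g k) = (\<Sum>k\<in>?A \<union> ?B. g k)"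
  proof -
    have z: "\<forall>i\<in>{..<K} - (?A \<union> ?B). g i = 0"
    proof
      fix i assume "i \<in> {..<K} - (?A \<union> ?B)"
      then have "i < K" "d i = 0" by auto
      then show "g i = 0" using assms by blast
    qed
    show ?thesis by (rule sum.mono_neutral_right) (use z in auto)
  qed
  also have "\<dots> = (\<Sum>k\<in>?A. g k) + (\<Sum>k\<in>?B. g k)"
    by (rule sum.union_disjoint) auto
  finally show ?thesis .
qed

lemma combine:
  fixes dl XA XB ZA ZB PA PB C :: real
  assumes dl: "0 < dl" and XA: "dl^2 \<le> XA * ZA" and XB: "dl^2 \<le> XB * ZB"
    and ZA: "0 < ZA" "ZA \<le> PA" and ZB: "0 < ZB" "ZB \<le> PB"
    and C: "4 * C \<le> 1 / PA + 1 / PB"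
  shows "C * (2 * dl)^2 \<le> XA + XB"
proof -
  have "dl^2 / PA \<le> dl^2 / ZA" using ZA by (intro divide_left_mono) auto
  also have "dl^2 / ZA \<le> XA" using XA ZA by (simp add: divide_le_eq)
  finally have a: "dl^2 / PA \<le> XA" .
  have "dl^2 / PB \<le> dl^2 / ZB" using ZB by (intro divide_left_mono) auto
  also have "dl^2 / ZB \<le> XB" using XB ZB by (simp add: divide_le_eq)
  finally have b: "dl^2 / PB \<le> XB" .
  have "C * (2 * dl)^2 = dl^2 * (4 * C)" by (simp add: power2_eq_square)
  also have "\<dots> \<le> dl^2 * (1 / PA + 1 / PB)" using C by (intro mult_left_mono) auto
  also have "\<dots> = dl^2 / PA + dl^2 / PB" by (simp add: field_simps)
  finally show ?thesis using a b by linarith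
qed

lemma hess_lb_le2:
  fixes a :: real and K :: nat and z d :: "nat \<Rightarrow> real"
  assumes K: "2 \<le> K" and a2: "a \<le> 2" and z: "\<forall>k<K. 0 < z k" and zs: "(\<Sum>k<K. z k) = 1"
    and ds: "(\<Sum>k<K. d k) = 0"
  shows "C_formula a K * (\<Sum>k<K. \<bar>d k\<bar>)^2 \<le> (\<Sum>k<K. (d k)^2 * f2 a (z k))"
proof -
  define r where "r = 2 - a"
  have r: "0 \<le> r" using a2 by (simp add: r_def)
  have f2r: "f2 a x = x powr (-r)" for x unfolding f2_def r_def by simp
  define A where "A = {k\<in>{..<K}. 0 < d k}"
  define B where "B = {k\<in>{..<K}. d k < 0}"
  have finA: "finite A" and finB: "finite B" unfolding A_def B_def by auto
  have disj: "A \<inter> B = {}" unfolding A_def B_def by auto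
  have sub: "A \<union> B \<subseteq> {..<K}" unfolding A_def B_def by auto
  have zA: "\<forall>k\<in>A. 0 < z k" and zB: "\<forall>k\<in>B. 0 < z k" using z unfolding A_def B_def by auto
  define dl where "dl = (\<Sum>k\<in>A. \<bar>d k\<bar>)"
  have s0: "0 = (\<Sum>k\<in>A. d k) + (\<Sum>k\<in>B. d k)"
    using split_sum[of K d d] ds unfolding A_def B_def by simp
  have sA: "(\<Sum>k\<in>A. d k) = dl" unfolding dl_def A_def by (intro sum.cong) auto
  have sB: "(\<Sum>k\<in>B. \<bar>d k\<bar>) = - (\<Sum>k\<in>B. d k)" unfolding B_def by (simp add: sum_negf[symmetric])
  have sBd: "(\<Sum>k\<in>B. \<bar>d k\<bar>) = dl" using s0 sA sB by linarith
  have L: "(\<Sum>k<K. \<bar>d k\<bar>) = 2 * dl"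
    using split_sum[of K d "\<lambda>k. \<bar>d k\<bar>"] sBd unfolding A_def[symmetric] B_def[symmetric] dl_def by simp
  have H: "(\<Sum>k<K. (d k)^2 * f2 a (z k)) = (\<Sum>k\<in>A. (d k)^2 * f2 a (z k)) + (\<Sum>k\<in>B. (d k)^2 * f2 a (z k))"
    using split_sum[of K d "\<lambda>k. (d k)^2 * f2 a (z k)"] unfolding A_def[symmetric] B_def[symmetric] by simp
  have Hnn: "0 \<le> (\<Sum>k\<in>A. (d k)^2 * f2 a (z k))" "0 \<le> (\<Sum>k\<in>B. (d k)^2 * f2 a (z k))"
    unfolding f2_def by (auto intro!: sum_nonneg)
  have dl0: "0 \<le> dl" unfolding dl_def by (simp add: sum_nonneg)
  show ?thesis
  proof (cases "dl = 0")
    case True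
    then show ?thesis unfolding L using H Hnn by simp
  next
    case False
    then have dl: "0 < dl" using dl0 by simp
    have Ane: "A \<noteq> {}" using dl unfolding dl_def by auto
    have Bne: "B \<noteq> {}" using dl sBd by auto
    define MA where "MA = (\<Sum>k\<in>A. z k)"
    define MB where "MB = (\<Sum>k\<in>B. z k)"
    have MA: "0 < MA" unfolding MA_def using finA Ane zA by (simp add: sum_pos)
    have MB: "0 < MB" unfolding MB_def using finB Bne zB by (simp add: sum_pos)
    have MAB: "MA + MB \<le> 1"
    proof -
      have "MA + MB = (\<Sum>k\<in>A \<union> B. z k)" unfolding MA_def MB_def
        by (rule sum.union_disjoint[symmetric]) (use finA finB disj in auto)
      also have "\<dots> \<le> (\<Sum>k<K. z k)" by (rule sum_mono2) (use sub z in auto)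
      finally show ?thesis using zs by simp
    qed
    define ZA where "ZA = (\<Sum>k\<in>A. z k powr r)"
    define ZB where "ZB = (\<Sum>k\<in>B. z k powr r)"
    have ZA: "0 < ZA" unfolding ZA_def using finA Ane zA by (intro sum_pos) auto
    have ZB: "0 < ZB" unfolding ZB_def using finB Bne zB by (intro sum_pos) auto
    have csA: "dl^2 \<le> (\<Sum>k\<in>A. (d k)^2 * f2 a (z k)) * ZA"
    proof -
      have "dl^2 \<le> (\<Sum>k\<in>A. (d k)^2 / z k powr r) * ZA"
        unfolding dl_def ZA_def by (rule CS_ineq) (use zA in auto)
      moreover have "(\<Sum>k\<in>A. (d k)^2 / z k powr r) = (\<Sum>k\<in>A. (d k)^2 * f2 a (z k))"
        unfolding f2r by (intro sum.cong refl) (simp add: powr_minus divide_inverse)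
      ultimately show ?thesis by simp
    qed
    have csB: "dl^2 \<le> (\<Sum>k\<in>B. (d k)^2 * f2 a (z k)) * ZB"
    proof -
      have "dl^2 \<le> (\<Sum>k\<in>B. (d k)^2 / z k powr r) * ZB"
        unfolding sBd[symmetric] ZB_def by (rule CS_ineq) (use zB in auto)
      moreover have "(\<Sum>k\<in>B. (d k)^2 / z k powr r) = (\<Sum>k\<in>B. (d k)^2 * f2 a (z k))"
        unfolding f2r by (intro sum.cong refl) (simp add: powr_minus divide_inverse)
      ultimately show ?thesis by simp
    qed
    have goal': "C_formula a K * (2 * dl)^2 \<le> (\<Sum>k\<in>A. (d k)^2 * f2 a (z k)) + (\<Sum>k\<in>B. (d k)^2 * f2 a (z k))"
    proof (cases "a \<le> 1")
      case True
      have r1: "1 \<le> r" using True by (simp add: r_def)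
      show ?thesis
      proof (rule combine[OF dl csA csB ZA _ ZB])
        show "ZA \<le> MA powr r" unfolding ZA_def MA_def by (rule PS1[OF finA zA r1])
        show "ZB \<le> MB powr r" unfolding ZB_def MB_def by (rule PS1[OF finB zB r1])
        have lam: "1 * (1/2) powr (-r-1) = (2::real) powr (3 - a)"
        proof -
          have "(1/2::real) powr (-r-1) = 1 / 2 powr (-r-1)" by (simp add: powr_divide)
          also have "\<dots> = 2 powr (r + 1)"
          proof -
            have "-r-1 = -(r+1)" by simp
            then have "(2::real) powr (-r-1) = inverse (2 powr (r + 1))" using powr_minus by metis
            then show ?thesis by (simp add: divide_inverse)
          qed
          moreover have "r + 1 = 3 - a" by (simp add: r_def)
          ultimately show ?thesis by simp
        qed
        have "(2::real) powr (3 - a) \<le> 1 * MA powr (-r) + 1 * MB powr (-r)"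
          by (rule G_ineq[where U="1/2" and V="1/2", OF _ _ _ _ MA MB _ r lam lam MAB]) auto
        moreover have "4 * C_formula a K = 2 powr (3 - a)"
          unfolding C_formula_def using True by (simp add: two_pow_ratio)
        moreover have "MA powr (-r) = 1 / MA powr r" "MB powr (-r) = 1 / MB powr r"
          by (simp_all add: powr_minus divide_inverse)
        ultimately show "4 * C_formula a K \<le> 1 / MA powr r + 1 / MB powr r" by simp
      qed
    next
      case False
      then have a1: "1 < a" by simp
      have r1: "r \<le> 1" using a1 by (simp add: r_def)
      define ca where "ca = real (card A)"
      define cb where "cb = real (card B)"
      have ca: "1 \<le> card A" using finA Ane by (simp add: Suc_le_eq card_gt_0_iff)
      have cb: "1 \<le> card B" using finB Bne by (simp add: Suc_le_eq card_gt_0_iff)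
      have cab: "card A + card B \<le> K"
      proof -
        have "card A + card B = card (A \<union> B)" using finA finB disj by (simp add: card_Un_disjoint)
        also have "\<dots> \<le> card {..<K}" by (rule card_mono) (use sub in auto)
        finally show ?thesis by simp
      qed
      have cap: "0 < ca" "0 < cb" using ca cb by (auto simp: ca_def cb_def)
      define e where "e = (1 - a) / (3 - a)"
      have e: "e \<le> 0" unfolding e_def using a1 a2 by (simp add: divide_nonpos_pos)
      have er: "(r - 1) / (1 + r) = e" unfolding e_def r_def by (simp add: algebra_simps)
      have r3: "1 + r = 3 - a" by (simp add: r_def)
      define W where "W = ca powr e + cb powr e"
      have W: "0 < W" unfolding W_def using cap by (simp add: add_pos_pos)
      show ?thesis
      proof (rule combine[OF dl csA csB ZA _ ZB])
        show "ZA \<le> ca powr (1 - r) * MA powr r" unfolding ZA_def MA_def ca_def by (rule PS2[OF finA Ane zA r r1])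
        show "ZB \<le> cb powr (1 - r) * MB powr r" unfolding ZB_def MB_def cb_def by (rule PS2[OF finB Bne zB r r1])
        have l1: "ca powr (r - 1) * (ca powr e / W) powr (-r-1) = W powr (1 + r)"
          using opt_lam[OF cap(1) W r] unfolding er .
        have l2: "cb powr (r - 1) * (cb powr e / W) powr (-r-1) = W powr (1 + r)"
          using opt_lam[OF cap(2) W r] unfolding er .
        have "W powr (1 + r) \<le> ca powr (r - 1) * MA powr (-r) + cb powr (r - 1) * MB powr (-r)"
          by (rule G_ineq[OF _ _ _ _ MA MB _ r l1 l2 MAB]) (use cap W in \<open>auto simp: W_def add_divide_distrib[symmetric]\<close>)
        moreover have "4 * C_formula a K \<le> W powr (1 + r)"
        proof -
          have "real (K div 2) powr e + real (K - K div 2) powr e \<le> W"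
            unfolding W_def ca_def cb_def by (rule int_split[OF e ca cb cab])
          then have "(real (K div 2) powr e + real (K - K div 2) powr e) powr (1 + r) \<le> W powr (1 + r)"
            using r by (intro powr_mono2) (auto intro: add_nonneg_nonneg)
          then show ?thesis unfolding r3 using Wstar_eq[OF a1 a2 K] unfolding e_def by simp
        qed
        moreover have "ca powr (r - 1) * MA powr (-r) = 1 / (ca powr (1 - r) * MA powr r)"
          using cap MA by (simp add: powr_minus divide_inverse powr_diff)
        moreover have "cb powr (r - 1) * MB powr (-r) = 1 / (cb powr (1 - r) * MB powr r)"
          using cap MB by (simp add: powr_minus divide_inverse powr_diff)
        ultimately show "4 * C_formula a K \<le> 1 / (ca powr (1 - r) * MA powr r) + 1 / (cb powr (1 - r) * MB powr r)"
          by simp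
      qed
    qed
    then show ?thesis unfolding L H .
  qed
qed

lemma hess_lb_gt2:
  fixes a :: real and K :: nat and z d :: "nat \<Rightarrow> real"
  assumes K: "2 \<le> K" and a2: "2 < a" and z: "\<forall>k<K. 0 < z k" and zs: "(\<Sum>k<K. z k) = 1"
    and ds: "(\<Sum>k<K. d k) = 0"
  shows "C_formula a K * (\<Sum>k<K. \<bar>d k\<bar>)^2 \<le> (\<Sum>k<K. (d k)^2 * f2 a (z k))"
proof (cases "K = 2")
  case False
  have "C_formula a K = 0" unfolding C_formula_def using a2 False by simp
  moreover have "0 \<le> (\<Sum>k<K. (d k)^2 * f2 a (z k))" unfolding f2_def by (auto intro!: sum_nonneg)
  ultimately show ?thesis by simp
next
  case True
  have s2: "(\<Sum>k<K. g k) = g 0 + g 1" for g :: "nat \<Rightarrow> real" unfolding True by (simp add: numeral_2_eq_2)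
  have d1: "d 1 = - d 0" using ds s2[of d] by simp
  have z1: "z 1 = 1 - z 0" using zs s2[of z] by simp
  have z0: "0 < z 0" "0 < z 1" using z True by auto
  define g where "g = a - 2"
  have g: "0 < g" using a2 by (simp add: g_def)
  have f2g: "f2 a x = x powr g" for x unfolding f2_def g_def by simp
  have L: "C_formula a K * (\<Sum>k<K. \<bar>d k\<bar>)^2 = (d 0)^2 * (4 * C_formula a K)"
    unfolding s2 d1 by (simp add: power2_eq_square abs_mult_self_eq)
  have R: "(\<Sum>k<K. (d k)^2 * f2 a (z k)) = (d 0)^2 * (z 0 powr g + z 1 powr g)"
    unfolding s2 d1 f2g by (simp add: algebra_simps)
  have key: "4 * C_formula a K \<le> z 0 powr g + z 1 powr g"
  proof (cases "3 \<le> a")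
    case True
    have g1: "1 \<le> g" using True by (simp add: g_def)
    have C: "4 * C_formula a K = 2 powr (3 - a)"
      unfolding C_formula_def using a2 True \<open>K = 2\<close> by (simp add: two_pow_ratio max_def)
    have t: "1 + g * (2 * z i - 1) \<le> 2 powr g * z i powr g" if "i < 2" for i
    proof -
      have "0 < z i" using z that True \<open>K = 2\<close> by auto
      then have "1 + g * (2 * z i - 1) \<le> (2 * z i) powr g" by (intro tan_convex g1) simp
      also have "(2 * z i) powr g = 2 powr g * z i powr g" using \<open>0 < z i\<close> by (simp add: powr_mult)
      finally show ?thesis .
    qed
    have e: "g * (2 * z 0 - 1) + g * (2 * z 1 - 1) = 0" unfolding z1 by (simp add: algebra_simps)
    have "2 \<le> 2 powr g * z 0 powr g + 2 powr g * z 1 powr g"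
      using t[of 0] t[of 1] e by simp
    then have "2 \<le> 2 powr g * (z 0 powr g + z 1 powr g)" by (simp add: algebra_simps)
    then have "2 / 2 powr g \<le> z 0 powr g + z 1 powr g" by (simp add: divide_le_eq mult.commute)
    moreover have "2 / 2 powr g = (2::real) powr (3 - a)"
    proof -
      have "2 / 2 powr g = (2::real) powr 1 / 2 powr g" by simp
      also have "\<dots> = 2 powr (1 - g)" by (rule powr_diff[symmetric])
      finally show ?thesis by (simp add: g_def)
    qed
    ultimately show ?thesis using C by simp
  next
    case False
    have C: "4 * C_formula a K = 1"
    proof -
      have "(2::real) powr (-2) = inverse (2 powr 2)" by (rule powr_minus)
      then have "(2::real) powr (-2) = 1/4" by simp
      then show ?thesis unfolding C_formula_def using a2 False \<open>K = 2\<close> by (simp add: max_def)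
    qed
    have g1: "g \<le> 1" using False by (simp add: g_def)
    have "z i \<le> z i powr g" if "i < 2" for i
    proof -
      have zi: "0 < z i" "z i \<le> 1" using z0 z1 that by (auto simp: less_2_cases_iff)
      have "z i powr 1 \<le> z i powr g" by (rule powr_mono') (use zi g1 in auto)
      then show ?thesis using zi by simp
    qed
    from this[of 0] this[of 1] show ?thesis using C z1 by simp
  qed
  show ?thesis unfolding L R by (intro mult_left_mono key) simp
qed

lemma hess_lb:
  fixes a :: real and K :: nat and z d :: "nat \<Rightarrow> real"
  assumes K: "2 \<le> K" and z: "\<forall>k<K. 0 < z k" and zs: "(\<Sum>k<K. z k) = 1"
    and ds: "(\<Sum>k<K. d k) = 0"
  shows "C_formula a K * (\<Sum>k<K. \<bar>d k\<bar>)^2 \<le> (\<Sum>k<K. (d k)^2 * f2 a (z k))"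
proof (cases "a \<le> 2")
  case True then show ?thesis using hess_lb_le2[OF K True z zs ds] by simp
next
  case False then show ?thesis using hess_lb_gt2[OF K _ z zs ds] by simp
qed

lemma C_formula_nonneg: "0 \<le> C_formula a K"
  unfolding C_formula_def sigma_const_def by auto

lemma lower_bound:
  assumes K: "2 \<le> K"
  shows "C_formula a K \<in> pinsker_consts a K"
  unfolding pinsker_consts_def
proof (intro CollectI conjI ballI C_formula_nonneg)
  fix p q assume p: "p \<in> relint_simplex K" and q: "q \<in> relint_simplex K"
  have pos: "\<forall>k<K. 0 < p k \<and> 0 < q k" using p q unfolding relint_simplex_def by auto
  have ps: "(\<Sum>k<K. p k) = 1" and qs: "(\<Sum>k<K. q k) = 1" using p q unfolding relint_simplex_def by auto
  obtain \<xi> where xi: "0 < \<xi>" "\<xi> < 1"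
    and T: "tsallis_div a K p q = (\<Sum>k<K. (p k - q k)^2 * f2 a (q k + \<xi> * (p k - q k))) / 2"
    using taylor_D[OF pos] by blast
  define z where "z k = q k + \<xi> * (p k - q k)" for k
  define d where "d k = p k - q k" for k
  have z: "\<forall>k<K. 0 < z k" unfolding z_def using pos xi by (auto intro!: seg_pos)
  have zs: "(\<Sum>k<K. z k) = 1" unfolding z_def using ps qs
    by (simp add: sum.distrib sum_distrib_left[symmetric] sum_subtractf)
  have ds: "(\<Sum>k<K. d k) = 0" unfolding d_def using ps qs by (simp add: sum_subtractf)
  have "C_formula a K * (\<Sum>k<K. \<bar>d k\<bar>)^2 \<le> (\<Sum>k<K. (d k)^2 * f2 a (z k))"
    by (rule hess_lb[OF K z zs ds])
  then show "C_formula a K / 2 * (l1_dist K p q)\<^sup>2 \<le> tsallis_div a K p q"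
    unfolding T l1_dist_def z_def d_def by simp
qed

lemma between_bound:
  fixes x y xi c :: real
  assumes x: "0 < x" and y: "0 < y" and xi: "0 \<le> xi" "xi \<le> 1"
  shows "(y + xi * (x - y)) powr c \<le> max (x powr c) (y powr c)"
proof -
  define z where "z = y + xi * (x - y)"
  have zpos: "0 < z" unfolding z_def by (rule seg_pos) (use x y xi in auto)
  have zc: "min x y \<le> z \<and> z \<le> max x y"
  proof (cases "x \<le> y")
    case True
    have a1: "xi * (x - y) \<le> 0" using True xi by (intro mult_nonneg_nonpos) auto
    have a2: "(1 - xi) * (x - y) \<le> 0" using True xi by (intro mult_nonneg_nonpos) auto
    have a3: "(1 - xi) * (x - y) = (x - y) - xi * (x - y)" by (simp add: algebra_simps)
    have b: "xi * (x - y) \<le> 0" "xi * (x - y) \<ge> x - y" using a1 a2 a3 by linarith+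
    have "min x y = x" "max x y = y" using True by auto
    then show ?thesis using b unfolding z_def by linarith
  next
    case False
    have a1: "xi * (x - y) \<ge> 0" using False xi by (intro mult_nonneg_nonneg) auto
    have a2: "(1 - xi) * (x - y) \<ge> 0" using False xi by (intro mult_nonneg_nonneg) auto
    have a3: "(1 - xi) * (x - y) = (x - y) - xi * (x - y)" by (simp add: algebra_simps)
    have b: "xi * (x - y) \<ge> 0" "xi * (x - y) \<le> x - y" using a1 a2 a3 by linarith+
    have "min x y = y" "max x y = x" using False by auto
    then show ?thesis using b unfolding z_def by linarith
  qed
  show ?thesis
  proof (cases "0 \<le> c")
    case True
    have "z powr c \<le> (max x y) powr c" using zc zpos True by (intro powr_mono2) auto
    also have "\<dots> \<le> max (x powr c) (y powr c)" by (simp add: max_def)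
    finally show ?thesis unfolding z_def .
  next
    case False
    have "z powr c \<le> (min x y) powr c" using zc zpos False x y by (intro powr_mono2') auto
    also have "\<dots> \<le> max (x powr c) (y powr c)" by (simp add: min_def)
    finally show ?thesis unfolding z_def .
  qed
qed

lemma upper_ineq:
  assumes C: "C \<in> pinsker_consts a K" and p: "p \<in> relint_simplex K" and q: "q \<in> relint_simplex K"
  shows "C * (l1_dist K p q)^2 \<le> (\<Sum>k<K. (p k - q k)^2 * max (p k powr (a - 2)) (q k powr (a - 2)))"
proof -
  have pos: "\<forall>k<K. 0 < p k \<and> 0 < q k" using p q unfolding relint_simplex_def by auto
  obtain \<xi> where xi: "0 < \<xi>" "\<xi> < 1"
    and T: "tsallis_div a K p q = (\<Sum>k<K. (p k - q k)^2 * f2 a (q k + \<xi> * (p k - q k))) / 2"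
    using taylor_D[OF pos] by blast
  have "C / 2 * (l1_dist K p q)^2 \<le> tsallis_div a K p q" using C p q unfolding pinsker_consts_def by auto
  also have "\<dots> \<le> (\<Sum>k<K. (p k - q k)^2 * max (p k powr (a - 2)) (q k powr (a - 2))) / 2"
    unfolding T f2_def
    by (intro divide_right_mono sum_mono mult_left_mono between_bound) (use pos xi in auto)
  finally show ?thesis by simp
qed

lemma relint_of:
  assumes K: "2 \<le> K" and pos: "\<forall>k<K. 0 < p k" and s: "(\<Sum>k<K. p k) = 1"
  shows "p \<in> relint_simplex K"
  unfolding relint_simplex_def
proof (intro CollectI conjI allI impI)
  fix k assume k: "k < K"
  show "0 < p k" using pos k by simp
  have ne: "{..<K} - {k} \<noteq> {}"
  proof
    assume "{..<K} - {k} = {}"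
    then have "{..<K} \<subseteq> {k}" by auto
    then have "card {..<K} \<le> card {k}" by (intro card_mono) auto
    then show False using K by simp
  qed
  have "(\<Sum>k<K. p k) = p k + (\<Sum>j\<in>{..<K} - {k}. p j)"
    using k by (subst sum.remove[of _ k]) auto
  moreover have "0 < (\<Sum>j\<in>{..<K} - {k}. p j)" using ne pos by (intro sum_pos) auto
  ultimately show "p k < 1" using s by linarith
qed (use s in simp)

lemma limit_bound:
  fixes C L t0 :: real and \<psi> :: "real \<Rightarrow> real"
  assumes b: "\<And>t. 0 < t \<Longrightarrow> t < t0 \<Longrightarrow> C \<le> \<psi> t" and t0: "0 < t0"
    and lim: "(\<psi> \<longlongrightarrow> L) (at_right 0)"
  shows "C \<le> L"
proof (rule tendsto_le[OF _ lim tendsto_const])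
  show "at_right (0::real) \<noteq> bot" by simp
  show "\<forall>\<^sub>F x in at_right 0. C \<le> \<psi> x"
    unfolding eventually_at_right_field using t0 b by blast
qed

lemma pert:
  fixes q :: "nat \<Rightarrow> real"
  assumes K: "2 \<le> K" and C: "C \<in> pinsker_consts a K" and q: "q \<in> relint_simplex K"
    and i: "i < K" and j: "j < K" and ij: "i \<noteq> j" and s: "0 < s" "s < q j"
  shows "4 * C \<le> max ((q i + s) powr (a - 2)) (q i powr (a - 2)) + max ((q j - s) powr (a - 2)) (q j powr (a - 2))"
proof -
  define p where "p k = q k + (if k = i then s else 0) - (if k = j then s else 0)" for k
  have qpos: "\<forall>k<K. 0 < q k" and qs: "(\<Sum>k<K. q k) = 1" using q unfolding relint_simplex_def by auto
  have ppos: "\<forall>k<K. 0 < p k" unfolding p_def using qpos s ij by auto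
  have ps: "(\<Sum>k<K. p k) = 1" unfolding p_def using qs i j
    by (simp add: sum.distrib sum_subtractf)
  have p: "p \<in> relint_simplex K" by (rule relint_of[OF K ppos ps])
  have L: "l1_dist K p q = 2 * s"
  proof -
    have "\<bar>p k - q k\<bar> = (if k = i then s else 0) + (if k = j then s else 0)" for k
      unfolding p_def using ij s by auto
    then show ?thesis unfolding l1_dist_def using i j by (simp add: sum.distrib)
  qed
  define Mi where "Mi = max ((q i + s) powr (a - 2)) (q i powr (a - 2))"
  define Mj where "Mj = max ((q j - s) powr (a - 2)) (q j powr (a - 2))"
  have R: "(\<Sum>k<K. (p k - q k)^2 * max (p k powr (a - 2)) (q k powr (a - 2))) = s^2 * Mi + s^2 * Mj"
  proof -
    have "(p k - q k)^2 * max (p k powr (a - 2)) (q k powr (a - 2)) =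
          (if k = i then s^2 * Mi else 0) + (if k = j then s^2 * Mj else 0)" for k
      unfolding p_def Mi_def Mj_def using ij by auto
    then show ?thesis using i j by (simp add: sum.distrib)
  qed
  have "C * (2 * s)^2 \<le> s^2 * Mi + s^2 * Mj" using upper_ineq[OF C p q] unfolding L R .
  then have "s^2 * (4 * C) \<le> s^2 * (Mi + Mj)" by (simp add: algebra_simps power2_eq_square)
  then show ?thesis unfolding Mi_def[symmetric] Mj_def[symmetric] using s by simp
qed

lemma sum_if_split:
  fixes X Y :: real
  assumes "m \<le> K"
  shows "(\<Sum>k<K. if k < m then X else Y) = real m * X + real (K - m) * Y"
proof -
  have "(\<Sum>k<K. if k < m then X else Y) = (\<Sum>k\<in>{..<K} \<inter> {k. k < m}. X) + (\<Sum>k\<in>{..<K} \<inter> - {k. k < m}. Y)"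
    by (rule sum.If_cases) simp
  also have "{..<K} \<inter> {k. k < m} = {..<m}" using assms by auto
  also have "{..<K} \<inter> - {k. k < m} = {m..<K}" by auto
  finally show ?thesis using assms by simp
qed

lemma half_pow: "((1/2::real) powr (a - 2)) / 2 = 2 powr (1 - a)"
proof -
  have "(1/2::real) powr (a - 2) = 1 / 2 powr (a - 2)" by (simp add: powr_divide)
  also have "\<dots> = 2 powr (- (a - 2))" by (subst powr_minus) (simp add: divide_inverse)
  finally have "((1/2::real) powr (a - 2)) / 2 = 2 powr (2 - a) / 2 powr 1" by simp
  also have "\<dots> = 2 powr ((2 - a) - 1)" by (rule powr_diff[symmetric])
  finally show ?thesis by simp
qed

lemma UB1:
  assumes K: "2 \<le> K" and C: "C \<in> pinsker_consts a K"
  shows "C \<le> ((1/2) powr (a - 2)) / 2"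
proof -
  define c where "c = a - 2"
  define h where "h t = (1 - real K * t) / 2" for t :: real
  define \<psi> where "\<psi> t = (max ((t + h t + t) powr c) ((t + h t) powr c) + max ((t + h t - t) powr c) ((t + h t) powr c)) / 4" for t
  have Kp: "0 < real K" using K by simp
  have b: "C \<le> \<psi> t" if t: "0 < t" "t < 1 / real K" for t
  proof -
    define q where "q k = t + (if k = 0 then h t else 0) + (if k = 1 then h t else 0)" for k :: nat
    have ht: "0 < h t" unfolding h_def using t Kp by (simp add: field_simps)
    have qpos: "\<forall>k<K. 0 < q k" unfolding q_def using t ht by auto
    have qs: "(\<Sum>k<K. q k) = 1" unfolding q_def using K
      by (simp add: sum.distrib h_def algebra_simps)
    have q: "q \<in> relint_simplex K" by (rule relint_of[OF K qpos qs])
    have q01: "q 0 = t + h t" "q 1 = t + h t" unfolding q_def by auto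
    have "4 * C \<le> max ((q 0 + t) powr (a - 2)) (q 0 powr (a - 2)) + max ((q 1 - t) powr (a - 2)) (q 1 powr (a - 2))"
      by (rule pert[OF K C q]) (use K t ht q01 in auto)
    then show ?thesis unfolding \<psi>_def q01 c_def by simp
  qed
  have lim: "(\<psi> \<longlongrightarrow> ((1/2) powr c) / 2) (at_right 0)"
  proof -
    have "(\<psi> \<longlongrightarrow> (max ((0 + h 0 + 0) powr c) ((0 + h 0) powr c) + max ((0 + h 0 - 0) powr c) ((0 + h 0) powr c)) / 4) (at_right 0)"
      unfolding \<psi>_def h_def by (intro tendsto_intros) auto
    then show ?thesis by (simp add: h_def)
  qed
  show ?thesis using limit_bound[OF b _ lim] Kp unfolding c_def by simp
qed

lemma UB23:
  assumes K: "2 \<le> K" and C: "C \<in> pinsker_consts a K" and a: "2 < a"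
  shows "C \<le> (if K = 2 then 1 / 4 else 0)"
proof -
  define c where "c = a - 2"
  have c: "0 < c" using a by (simp add: c_def)
  define q1 where "q1 t = t + (if K = 2 then 1 - real K * t else 0)" for t :: real
  define \<psi> where "\<psi> t = (max ((t + t / 2) powr c) (t powr c) + max ((q1 t - t / 2) powr c) ((q1 t) powr c)) / 4" for t
  have Kp: "0 < real K" using K by simp
  have b: "C \<le> \<psi> t" if t: "0 < t" "t < 1 / real K" for t
  proof -
    define q where "q k = t + (if k = K - 1 then 1 - real K * t else 0)" for k :: nat
    have Kt: "0 < 1 - real K * t" using t Kp by (simp add: field_simps)
    have qpos: "\<forall>k<K. 0 < q k" unfolding q_def using t Kt by auto
    have qs: "(\<Sum>k<K. q k) = 1" unfolding q_def using K
      by (simp add: sum.distrib algebra_simps)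
    have q: "q \<in> relint_simplex K" by (rule relint_of[OF K qpos qs])
    have q0: "q 0 = t" unfolding q_def using K by auto
    have q1: "q 1 = q1 t" unfolding q_def q1_def using K by auto
    have "4 * C \<le> max ((q 0 + t / 2) powr (a - 2)) (q 0 powr (a - 2)) + max ((q 1 - t / 2) powr (a - 2)) (q 1 powr (a - 2))"
      by (rule pert[OF K C q]) (use K t Kt q1 q1_def in auto)
    then show ?thesis unfolding \<psi>_def q0 q1 c_def by simp
  qed
  have lim: "(\<psi> \<longlongrightarrow> (max (0 powr c) (0 powr c) + max ((q1 0 - 0 / 2) powr c) ((q1 0) powr c)) / 4) (at_right 0)"
    unfolding \<psi>_def q1_def using c
    by (intro tendsto_intros) (auto simp: eventually_at_right_field intro: exI[of _ 1] intro!: tendsto_eq_intros)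
  have "C \<le> (max (0 powr c) (0 powr c) + max ((q1 0 - 0 / 2) powr c) ((q1 0) powr c)) / 4"
    by (rule limit_bound[OF b _ lim]) (use Kp in auto)
  then show ?thesis unfolding q1_def by (auto split: if_splits)
qed

lemma pw_aux: "0 < (X::real) \<Longrightarrow> X powr (-r) = X powr (-r-1) * X"
proof -
  assume X: "0 < X"
  have "X powr (-r) = X powr ((-r-1) + 1)" by simp
  also have "\<dots> = X powr (-r-1) * X powr 1" by (rule powr_add)
  finally show ?thesis using X by simp
qed

lemma blk_term:
  fixes M U r :: real
  assumes M: "0 < M" and U: "0 < U"
  shows "(U / M) powr (-r) / M = M powr (r - 1) * U powr (-r)"
proof -
  have "(U / M) powr (-r) = U powr (-r) / M powr (-r)" using M U by (simp add: powr_divide)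
  also have "M powr (-r) = inverse (M powr r)" by (rule powr_minus)
  finally have "(U / M) powr (-r) / M = U powr (-r) * (M powr r / M)" by (simp add: field_simps)
  also have "M powr r / M = M powr (r - 1)" using M by (simp add: powr_diff)
  finally show ?thesis by simp
qed

lemma UB4:
  assumes K: "2 \<le> K" and C: "C \<in> pinsker_consts a K" and a1: "1 < a" and a2: "a \<le> 2"
  shows "C \<le> C_formula a K"
proof -
  define r where "r = 2 - a"
  have r: "0 \<le> r" using a2 by (simp add: r_def)
  define m1 where "m1 = K - K div 2"
  define m2 where "m2 = K div 2"
  have m12: "K - m1 = m2" "m1 \<le> K" unfolding m1_def m2_def by auto
  define M1 where "M1 = real m1"
  define M2 where "M2 = real m2"
  have M: "0 < M1" "0 < M2" unfolding M1_def M2_def m1_def m2_def using K by auto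
  define e where "e = (1 - a) / (3 - a)"
  have er: "(r - 1) / (1 + r) = e" unfolding e_def r_def by (simp add: algebra_simps)
  define W where "W = M2 powr e + M1 powr e"
  have W: "0 < W" unfolding W_def using M by (simp add: add_pos_pos)
  define U where "U = M1 powr e / W"
  define V where "V = M2 powr e / W"
  have UV0: "0 < U" "0 < V" unfolding U_def V_def using M W by auto
  have "U + V = (M2 powr e + M1 powr e) / W" unfolding U_def V_def by (simp add: add_divide_distrib)
  then have UV1: "U + V = 1" using W unfolding W_def[symmetric] by simp
  note UV = UV0 UV1
  define u where "u = U / M1"
  define v where "v = V / M2"
  have uv: "0 < u" "0 < v" unfolding u_def v_def using UV M by auto
  define c where "c = a - 2"
  have cr: "c = -r" unfolding c_def r_def by simp
  define \<psi> where "\<psi> t = max ((u + t / M1) powr c) (u powr c) / M1 + max ((v - t / M2) powr c) (v powr c) / M2" for t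
  have b: "4 * C \<le> \<psi> t" if t: "0 < t" "t < V" for t
  proof -
    define q where "q k = (if k < m1 then u else v)" for k
    define p where "p k = (if k < m1 then u + t / M1 else v - t / M2)" for k
    have vt: "0 < v - t / M2" unfolding v_def using t M by (simp add: field_simps)
    have ut: "0 < u + t / M1" using uv t M by (simp add: add_pos_pos)
    have qs: "(\<Sum>k<K. q k) = 1" unfolding q_def sum_if_split[OF m12(2)] m12(1)
      using UV M by (simp add: u_def v_def M1_def[symmetric] M2_def[symmetric])
    have MUV: "M1 * U + M1 * V = M1" using UV(3) by (metis distrib_left mult_1_right)
    have ps: "(\<Sum>k<K. p k) = 1" unfolding p_def sum_if_split[OF m12(2)] m12(1)
      using UV M MUV by (simp add: u_def v_def M1_def[symmetric] M2_def[symmetric] field_simps)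
    have q: "q \<in> relint_simplex K" by (rule relint_of[OF K _ qs]) (use uv in \<open>auto simp: q_def\<close>)
    have p: "p \<in> relint_simplex K" by (rule relint_of[OF K _ ps]) (use ut vt in \<open>auto simp: p_def\<close>)
    have L: "l1_dist K p q = 2 * t"
    proof -
      have "\<bar>p k - q k\<bar> = (if k < m1 then t / M1 else t / M2)" for k
        unfolding p_def q_def using t M by auto
      then have "l1_dist K p q = (\<Sum>k<K. if k < m1 then t / M1 else t / M2)" unfolding l1_dist_def by simp
      also have "\<dots> = 2 * t" unfolding sum_if_split[OF m12(2)] m12(1)
        using M by (simp add: M1_def[symmetric] M2_def[symmetric])
      finally show ?thesis .
    qed
    have R: "(\<Sum>k<K. (p k - q k)^2 * max (p k powr (a - 2)) (q k powr (a - 2))) = t^2 * \<psi> t"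
    proof -
      have "(p k - q k)^2 * max (p k powr (a - 2)) (q k powr (a - 2)) =
        (if k < m1 then (t / M1)^2 * max ((u + t / M1) powr c) (u powr c) else (t / M2)^2 * max ((v - t / M2) powr c) (v powr c))" for k
        unfolding p_def q_def c_def by auto
      then have "(\<Sum>k<K. (p k - q k)^2 * max (p k powr (a - 2)) (q k powr (a - 2))) = (\<Sum>k<K.
        (if k < m1 then (t / M1)^2 * max ((u + t / M1) powr c) (u powr c) else (t / M2)^2 * max ((v - t / M2) powr c) (v powr c)))"
        by simp
      then show ?thesis unfolding sum_if_split[OF m12(2)] m12(1) \<psi>_def
        using M by (simp add: M1_def[symmetric] M2_def[symmetric] power2_eq_square field_simps)
    qed
    have "C * (2 * t)^2 \<le> t^2 * \<psi> t" using upper_ineq[OF C p q] unfolding L R .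
    then have "t^2 * (4 * C) \<le> t^2 * \<psi> t" by (simp add: algebra_simps power2_eq_square)
    then show ?thesis using t by simp
  qed
  have lim: "(\<psi> \<longlongrightarrow> max ((u + 0 / M1) powr c) (u powr c) / M1 + max ((v - 0 / M2) powr c) (v powr c) / M2) (at_right 0)"
    unfolding \<psi>_def using uv M by (intro tendsto_intros) auto
  have "4 * C \<le> max ((u + 0 / M1) powr c) (u powr c) / M1 + max ((v - 0 / M2) powr c) (v powr c) / M2"
    by (rule limit_bound[OF b UV(2) lim])
  also have "\<dots> = u powr c / M1 + v powr c / M2" by simp
  also have "\<dots> = W powr (1 + r)"
  proof -
    have l1: "M1 powr (r - 1) * U powr (-r-1) = W powr (1 + r)"
      using opt_lam[OF M(1) W r] unfolding er U_def .
    have l2: "M2 powr (r - 1) * V powr (-r-1) = W powr (1 + r)"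
      using opt_lam[OF M(2) W r] unfolding er V_def .
    have "u powr c / M1 = W powr (1 + r) * U"
      unfolding u_def cr blk_term[OF M(1) UV(1)] pw_aux[OF UV(1)] using l1 by (simp add: mult_ac)
    moreover have "v powr c / M2 = W powr (1 + r) * V"
      unfolding v_def cr blk_term[OF M(2) UV(2)] pw_aux[OF UV(2)] using l2 by (simp add: mult_ac)
    ultimately show ?thesis using UV(3) by (simp add: distrib_left[symmetric])
  qed
  also have "\<dots> = 4 * C_formula a K"
  proof -
    have "1 + r = 3 - a" by (simp add: r_def)
    then show ?thesis using Wstar_eq[OF a1 a2 K] unfolding W_def M1_def M2_def m1_def m2_def e_def by simp
  qed
  finally show ?thesis by simp
qed

theorem theorem1:
  fixes \<alpha> :: real and K :: nat
  assumes "K \<ge> 2"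
  shows "is_arg_max (\<lambda>C. C) (\<lambda>C. C \<in> pinsker_consts \<alpha> K) (C_formula \<alpha> K)"
proof -
  have K: "2 \<le> K" using assms by simp
  have ub: "C \<le> C_formula \<alpha> K" if C: "C \<in> pinsker_consts \<alpha> K" for C
  proof (cases "\<alpha> \<le> 1")
    case True
    have "C \<le> ((1/2) powr (\<alpha> - 2)) / 2" by (rule UB1[OF K C])
    then show ?thesis unfolding half_pow C_formula_def using True by simp
  next
    case False
    note a1 = this
    show ?thesis
    proof (cases "\<alpha> \<le> 2")
      case True
      show ?thesis by (rule UB4[OF K C]) (use a1 True in auto)
    next
      case False
      have a2: "2 < \<alpha>" using False by simp
      have u23: "C \<le> (if K = 2 then 1 / 4 else 0)" by (rule UB23[OF K C a2])
      show ?thesis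
      proof (cases "K = 2")
        case False
        then show ?thesis using u23 a2 unfolding C_formula_def by simp
      next
        case True
        show ?thesis
        proof (cases "3 \<le> \<alpha>")
          case True
          have "C \<le> ((1/2) powr (\<alpha> - 2)) / 2" by (rule UB1[OF K C])
          then show ?thesis unfolding half_pow C_formula_def using True a2 \<open>K = 2\<close> by (simp add: max_def)
        next
          case False
          have "(2::real) powr (-2) = inverse (2 powr 2)" by (rule powr_minus)
          then have "(2::real) powr (-2) = 1/4" by simp
          then show ?thesis using u23 a2 False \<open>K = 2\<close> unfolding C_formula_def by (simp add: max_def)
        qed
      qed
    qed
  qed
  show ?thesis unfolding is_arg_max_def using lower_bound[OF K, of \<alpha>] ub by (auto simp: not_less)
qed


end
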